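(* Let $\mathscr T=(V,\mathcal E)$ be the directed Cartesian product of directed trees $\mathscr T_1,\dots,\mathscr T_d$. Then (i) $\mathscr T$ has no circuits; (ii) $\mathscr T$ is connected; (iii) $\mathscr T$ has at most one root; (iv) $\mathrm{card}(\mathsf{Chi}(u)\cap\mathsf{Chi}(v))\le1$ for all $u,v\in V$ with $u\ne v$.
   Context: A directed graph is a pair $(V,\mathcal E)$ with $\mathcal E\subseteq (V\times V)\setminus\{(v,v):v\in V\}$. A circuit is a finite sequence $v_1,\dots,v_n$ ($n\ge2$) of distinct vertices with $(v_i,v_{i+1})\in\mathcal E$ for $i<n$ and $(v_n,v_1)\in\mathcal E$. The graph is connected if any two distinct vertices $u,v$ are joined by a finite sequence of distinct vertices $u=v_1,\dots,v_n=v$ with $(v_i,v_{i+1})$ or $(v_{i+1},v_i)\in\mathcal E$ for each $i$. A root is a vertex $v$ with no $u$ such that $(u,v)\in\mathcal E$. A directed tree is a connected directed graph without circuits in which every non-root vertex has exactly one $u$ with $(u,v)\in\mathcal E$. All directed trees are assumed leafless (each vertex has at least one $w$ with $(v,w)\in\mathcal E$). $\mathsf{Chi}(u)=\{v:(u,v)\in\mathcal E\}$. The directed Cartesian product of directed trees $\mathscr T_j=(V_j,\mathcal E_j)$ is $V=V_1\times\dots\times V_d$ with $(v,w)\in\mathcal E$ iff there is $k$ with $(v_k,w_k)\in\mathcal E_k$ and $w_j=v_j$ for $j\ne k$. *)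

theory Defs
  imports Main "HOL-Library.FuncSet"
begin

definition digraph :: "'a set \<Rightarrow> ('a \<times> 'a) set \<Rightarrow> bool" where
  "digraph V E \<longleftrightarrow> E \<subseteq> (V \<times> V) - {(v, v) | v. v \<in> V}"

definition circuit :: "'a set \<Rightarrow> ('a \<times> 'a) set \<Rightarrow> 'a list \<Rightarrow> bool" where
  "circuit V E vs \<longleftrightarrow> length vs \<ge> 2 \<and> distinct vs \<and> set vs \<subseteq> V \<and>
     (\<forall>i. Suc i < length vs \<longrightarrow> (vs ! i, vs ! Suc i) \<in> E) \<and>
     (last vs, hd vs) \<in> E"

definition has_circuit :: "'a set \<Rightarrow> ('a \<times> 'a) set \<Rightarrow> bool" where
  "has_circuit V E \<longleftrightarrow> (\<exists>vs. circuit V E vs)"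

definition connected_digraph :: "'a set \<Rightarrow> ('a \<times> 'a) set \<Rightarrow> bool" where
  "connected_digraph V E \<longleftrightarrow>
     (\<forall>u\<in>V. \<forall>v\<in>V. u \<noteq> v \<longrightarrow>
        (\<exists>vs. vs \<noteq> [] \<and> hd vs = u \<and> last vs = v \<and> distinct vs \<and> set vs \<subseteq> V \<and>
              (\<forall>i. Suc i < length vs \<longrightarrow>
                 (vs ! i, vs ! Suc i) \<in> E \<or> (vs ! Suc i, vs ! i) \<in> E)))"

definition is_root :: "'a set \<Rightarrow> ('a \<times> 'a) set \<Rightarrow> 'a \<Rightarrow> bool" where
  "is_root V E v \<longleftrightarrow> v \<in> V \<and> \<not> (\<exists>u. (u, v) \<in> E)"

definition Chi :: "('a \<times> 'a) set \<Rightarrow> 'a \<Rightarrow> 'a set" where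
  "Chi E u = {v. (u, v) \<in> E}"

definition directed_tree :: "'a set \<Rightarrow> ('a \<times> 'a) set \<Rightarrow> bool" where
  "directed_tree V E \<longleftrightarrow> digraph V E \<and> connected_digraph V E \<and> \<not> has_circuit V E \<and>
     (\<forall>v\<in>V. \<not> is_root V E v \<longrightarrow> (\<exists>!u. (u, v) \<in> E)) \<and>
     (\<forall>v\<in>V. \<exists>w. (v, w) \<in> E)"

text \<open>Directed Cartesian product of trees indexed by j < d (paper's 1..d), vertices being
  extensional functions on {..<d}.\<close>
definition prod_V :: "nat \<Rightarrow> (nat \<Rightarrow> 'a set) \<Rightarrow> (nat \<Rightarrow> 'a) set" where
  "prod_V d Vs = PiE {..<d} Vs"

definition prod_E :: "nat \<Rightarrow> (nat \<Rightarrow> 'a set) \<Rightarrow> (nat \<Rightarrow> ('a \<times> 'a) set)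
                      \<Rightarrow> ((nat \<Rightarrow> 'a) \<times> (nat \<Rightarrow> 'a)) set" where
  "prod_E d Vs Es = {(v, w). v \<in> prod_V d Vs \<and> w \<in> prod_V d Vs \<and>
      (\<exists>k<d. (v k, w k) \<in> Es k \<and> (\<forall>j<d. j \<noteq> k \<longrightarrow> w j = v j))}"

end

theory Submission
  imports Defs
begin

lemma path_skip:
  assumes f: "\<forall>t<n. (f t, f (Suc t)) \<in> S" and ij: "i < j" "j \<le> n" and eq: "f i = f j"
  shows "(f 0, f n) \<in> S ^^ (n - (j - i))"
proof -
  define g where "g t = (if t \<le> i then f t else f (t + (j - i)))" for t
  have "g 0 = f 0" by (simp add: g_def)
  moreover have "g (n - (j - i)) = f n"
  proof (cases "n - (j - i) \<le> i")
    case True then have "n = j" using ij by auto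
    then show ?thesis using ij eq by (auto simp: g_def)
  next
    case False then show ?thesis using ij by (auto simp: g_def)
  qed
  moreover have "\<forall>t < n - (j - i). (g t, g (Suc t)) \<in> S"
  proof (intro allI impI)
    fix t assume t: "t < n - (j - i)"
    show "(g t, g (Suc t)) \<in> S"
    proof (cases "t < i")
      case True then show ?thesis using f ij by (auto simp: g_def)
    next
      case False
      show ?thesis
      proof (cases "t = i")
        case True
        then have "g t = f j" "g (Suc t) = f (Suc j)" using ij eq by (auto simp: g_def)
        then show ?thesis using f ij t True by auto
      next
        case False
        then have "g t = f (t + (j - i))" "g (Suc t) = f (Suc (t + (j - i)))" using \<open>\<not> t < i\<close> by (auto simp: g_def)
        then show ?thesis using f ij t by auto
      qed
    qed
  qed
  ultimately show ?thesis unfolding relpow_fun_conv by metis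
qed



lemma simple_path:
  assumes "(u,v) \<in> S\<^sup>*" "S \<subseteq> V \<times> V" "u \<in> V"
  shows "\<exists>vs. vs \<noteq> [] \<and> hd vs = u \<and> last vs = v \<and> distinct vs \<and> set vs \<subseteq> V \<and>
    (\<forall>i. Suc i < length vs \<longrightarrow> (vs!i, vs!Suc i) \<in> S)"
proof -
  define n where "n = (LEAST n. (u,v) \<in> S^^n)"
  have ex: "\<exists>n. (u,v) \<in> S^^n" using assms(1) rtrancl_power by blast
  have "(u,v) \<in> S^^n" unfolding n_def using ex by (metis LeastI)
  then obtain f where f0: "f 0 = u" and fn: "f n = v" and fs: "\<forall>t<n. (f t, f (Suc t)) \<in> S"
    unfolding relpow_fun_conv by blast
  define vs where "vs = map f [0..<Suc n]"
  have dist: "f i \<noteq> f j" if "i < j" "j \<le> n" for i j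
  proof
    assume "f i = f j"
    from path_skip[OF fs that this] f0 fn have "(u,v) \<in> S^^(n - (j-i))" by simp
    moreover have "n - (j - i) < n" using that by auto
    ultimately show False unfolding n_def using not_less_Least by blast
  qed
  have "distinct vs" unfolding vs_def distinct_conv_nth
    apply (auto simp del: upt_Suc)
    by (metis dist linorder_neqE_nat less_Suc_eq_le)
  moreover have "set vs \<subseteq> V"
  proof
    fix x assume "x \<in> set vs"
    then obtain t where t: "t \<le> n" "x = f t" unfolding vs_def by (auto simp del: upt_Suc simp: less_Suc_eq_le)
    show "x \<in> V"
    proof (cases t)
      case 0 then show ?thesis using t f0 assms by auto
    next
      case (Suc s) then show ?thesis using t fs[rule_format, of s] assms(2) by auto
    qed
  qed
  moreover have "vs \<noteq> [] \<and> hd vs = u \<and> last vs = v"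
    unfolding vs_def using f0 fn by (simp add: hd_map last_map del: upt_Suc)
  moreover have "\<forall>i. Suc i < length vs \<longrightarrow> (vs!i, vs!Suc i) \<in> S"
    unfolding vs_def using fs by (simp del: upt_Suc)
  ultimately show ?thesis by blast
qed




lemma path_rtrancl:
  assumes "vs \<noteq> []" "\<forall>i. Suc i < length vs \<longrightarrow> (vs!i, vs!Suc i) \<in> S"
  shows "(hd vs, last vs) \<in> S\<^sup>*"
  using assms
proof (induction vs)
  case Nil then show ?case by simp
next
  case (Cons a vs)
  show ?case
  proof (cases vs)
    case Nil then show ?thesis by simp
  next
    case (Cons b ws)
    have "(a, b) \<in> S" using Cons.prems(2)[rule_format, of 0] Cons by simp
    moreover have "(hd vs, last vs) \<in> S\<^sup>*"
      apply (rule Cons.IH) using Cons Cons.prems(2) by auto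
    ultimately show ?thesis using Cons by simp
  qed
qed



lemma cycle_circuit:
  assumes dg: "digraph V E" and xx: "(x,x) \<in> E\<^sup>+"
  shows "has_circuit V E"
proof -
  define P where "P n = (0 < n \<and> (\<exists>y. (y,y) \<in> E^^n))" for n
  have ex: "P n" if "n > 0 \<and> (x,x) \<in> E^^n" for n using that unfolding P_def by auto
  obtain n0 where "n0 > 0 \<and> (x,x) \<in> E^^n0" using xx trancl_power by blast
  then have "P n0" using ex by blast
  define n where "n = (LEAST n. P n)"
  have Pn: "P n" unfolding n_def using \<open>P n0\<close> by (metis LeastI)
  then obtain y where n0: "0 < n" and "(y,y) \<in> E^^n" unfolding P_def by auto
  then obtain f where f0: "f 0 = y" and fn: "f n = y" and fs: "\<forall>t<n. (f t, f (Suc t)) \<in> E"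
    unfolding relpow_fun_conv by blast
  have EV: "E \<subseteq> V \<times> V" and noloop: "\<And>v. (v,v) \<notin> E" using dg unfolding digraph_def by auto
  have n2: "n \<ge> 2"
  proof (rule ccontr)
    assume "\<not> n \<ge> 2" then have "n = 1" using n0 by auto
    then have "(f 0, f (Suc 0)) \<in> E" using fs by simp
    then show False using f0 fn noloop \<open>n = 1\<close> by simp
  qed
  have dist: "f i \<noteq> f j" if "i < j" "j < n" for i j
  proof
    assume eq: "f i = f j"
    have "(f i, f j) \<in> E^^(j - i)" unfolding relpow_fun_conv
      apply (rule exI[of _ "\<lambda>t. f (i + t)"]) using that fs by auto
    then have "P (j - i)" unfolding P_def using eq that by auto
    moreover have "j - i < n" using that by auto
    ultimately show False unfolding n_def using not_less_Least by blast
  qed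
  define vs where "vs = map f [0..<n]"
  have "circuit V E vs" unfolding circuit_def
  proof (intro conjI)
    show "2 \<le> length vs" using n2 by (simp add: vs_def)
    have dd: "\<forall>i<n. \<forall>j<n. i \<noteq> j \<longrightarrow> f i \<noteq> f j"
      using dist by (metis linorder_neqE_nat)
    show "distinct vs" unfolding vs_def distinct_conv_nth using dd by simp
    show "set vs \<subseteq> V" unfolding vs_def using fs EV by auto
    show "\<forall>i. Suc i < length vs \<longrightarrow> (vs ! i, vs ! Suc i) \<in> E"
      unfolding vs_def using fs by simp
    have "last vs = f (n - 1)" "hd vs = f 0" unfolding vs_def using n2
      by (simp_all add: last_map hd_map)
    then show "(last vs, hd vs) \<in> E" using fs[rule_format, of "n-1"] n2 f0 fn by simp
  qed
  then show ?thesis unfolding has_circuit_def by blast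
qed



lemma tree_no_cycle:
  assumes "directed_tree V E" shows "(x,x) \<notin> E\<^sup>+"
proof
  assume "(x,x) \<in> E\<^sup>+"
  moreover have "digraph V E" "\<not> has_circuit V E" using assms unfolding directed_tree_def by auto
  ultimately show False using cycle_circuit[of V E x] by simp
qed


lemma tree_parent_unique:
  assumes t: "directed_tree V E" and "(a,c) \<in> E" "(b,c) \<in> E"
  shows "a = b"
proof -
  have "c \<in> V" using t assms unfolding directed_tree_def digraph_def by auto
  moreover have "\<not> is_root V E c" using assms unfolding is_root_def by auto
  ultimately have "\<exists>!u. (u,c) \<in> E" using t unfolding directed_tree_def by blast
  then show ?thesis using assms by blast
qed



lemma tree_root_unique:
  assumes t: "directed_tree V E" and r1: "is_root V E r1" and r2: "is_root V E r2"
  shows "r1 = r2"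
proof (rule ccontr)
  assume ne: "r1 \<noteq> r2"
  have "r1 \<in> V" "r2 \<in> V" using r1 r2 unfolding is_root_def by auto
  then obtain vs where vs: "vs \<noteq> []" "hd vs = r1" "last vs = r2" "distinct vs"
    and st: "\<forall>i. Suc i < length vs \<longrightarrow> (vs ! i, vs ! Suc i) \<in> E \<or> (vs ! Suc i, vs ! i) \<in> E"
    using t ne unfolding directed_tree_def connected_digraph_def by blast
  define m where "m = length vs"
  have m2: "m \<ge> 2"
  proof (rule ccontr)
    assume "\<not> m \<ge> 2"
    moreover have "m > 0" using vs(1) m_def by simp
    ultimately have "m = 1" by arith
    then have "hd vs = last vs" using m_def vs(1) by (simp add: hd_conv_nth last_conv_nth)
    then show False using vs ne by simp
  qed
  have h0: "vs ! 0 = r1" using vs by (simp add: hd_conv_nth)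
  have hl: "vs ! (m - 1) = r2" using vs m_def by (simp add: last_conv_nth)
  define Q where "Q i = (Suc i < m \<and> (vs!i, vs!Suc i) \<notin> E)" for i
  have "Q (m - 2)"
  proof -
    have "Suc (m-2) = m - 1" using m2 by auto
    then show ?thesis unfolding Q_def using r2 hl m2 unfolding is_root_def by auto
  qed
  define i where "i = (LEAST i. Q i)"
  have Qi: "Q i" unfolding i_def using \<open>Q (m-2)\<close> by (metis LeastI)
  have bk: "(vs ! Suc i, vs ! i) \<in> E" using Qi st m_def unfolding Q_def by blast
  have "i \<noteq> 0" proof assume "i = 0" then show False using bk h0 r1 unfolding is_root_def by auto qed
  then obtain k where ik: "i = Suc k" by (cases i) auto
  have "\<not> Q k" unfolding i_def using ik by (metis i_def lessI not_less_Least)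
  then have fw: "(vs ! k, vs ! i) \<in> E" using Qi ik unfolding Q_def by auto
  have "vs ! k = vs ! Suc i" using tree_parent_unique[OF t fw bk] .
  moreover have "Suc i < length vs" using Qi m_def Q_def by auto
  ultimately show False using vs(4) ik by (simp add: nth_eq_iff_index_eq)
qed




lemma upd_PiE: "x \<in> PiE I X \<Longrightarrow> j \<in> I \<Longrightarrow> a \<in> X j \<Longrightarrow> x(j := a) \<in> PiE I X"
  unfolding PiE_iff extensional_def by auto

lemma tree_E_sub: "directed_tree V E \<Longrightarrow> E \<subseteq> V \<times> V"
  unfolding directed_tree_def digraph_def by blast

lemma prod_E_iff: "(v,w) \<in> prod_E d Vs Es \<longleftrightarrow> v \<in> prod_V d Vs \<and> w \<in> prod_V d Vs \<and>
      (\<exists>k<d. (v k, w k) \<in> Es k \<and> (\<forall>j<d. j \<noteq> k \<longrightarrow> w j = v j))"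
  unfolding prod_E_def by simp

lemma prod_E_V: "(v,w) \<in> prod_E d Vs Es \<Longrightarrow> v \<in> prod_V d Vs \<and> w \<in> prod_V d Vs"
  by (simp add: prod_E_iff)

lemma edge_form:
  assumes "(u,w) \<in> prod_E d Vs Es"
  shows "\<exists>k<d. (u k, w k) \<in> Es k \<and> w = u(k := w k)"
proof -
  obtain k where k: "k < d" "(u k, w k) \<in> Es k" "\<forall>j<d. j \<noteq> k \<longrightarrow> w j = u j"
    and uV: "u \<in> prod_V d Vs" and wV: "w \<in> prod_V d Vs" using assms by (auto simp: prod_E_iff)
  have "w = u(k := w k)"
  proof
    fix j show "w j = (u(k := w k)) j"
    proof (cases "j < d")
      case True then show ?thesis using k by auto
    next
      case False then show ?thesis using uV wV PiE_arb[of u "{..<d}" Vs j] PiE_arb[of w "{..<d}" Vs j] k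
        by (auto simp: prod_V_def)
    qed
  qed
  then show ?thesis using k by blast
qed

lemma coord_step:
  assumes "(v,w) \<in> prod_E d Vs Es"
  shows "(v j, w j) \<in> (Es j)\<^sup>*"
proof -
  obtain k where "k<d" "(v k, w k) \<in> Es k" "w = v(k := w k)" using edge_form[OF assms] by blast
  show ?thesis
  proof (cases "j = k")
    case True then show ?thesis using \<open>(v k, w k) \<in> Es k\<close> by auto
  next
    case False
    then have "w j = v j" using \<open>w = v(k := w k)\<close> by (metis fun_upd_other)
    then show ?thesis by simp
  qed
qed

lemma coord_rtrancl:
  assumes "(v,w) \<in> (prod_E d Vs Es)\<^sup>*"
  shows "(v j, w j) \<in> (Es j)\<^sup>*"
  using assms
proof (induction rule: rtrancl_induct)
  case base then show ?case by simp
next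
  case (step y z) then show ?case using coord_step[OF step(2), of j] by simp
qed

lemma part1:
  assumes trees: "\<And>j. j < d \<Longrightarrow> directed_tree (Vs j) (Es j)"
  shows "\<not> has_circuit (prod_V d Vs) (prod_E d Vs Es)"
proof
  assume "has_circuit (prod_V d Vs) (prod_E d Vs Es)"
  then obtain vs where c: "circuit (prod_V d Vs) (prod_E d Vs Es) vs" unfolding has_circuit_def by blast
  let ?E = "prod_E d Vs Es"
  have len: "length vs \<ge> 2" and st: "\<forall>i. Suc i < length vs \<longrightarrow> (vs ! i, vs ! Suc i) \<in> ?E"
    and cl: "(last vs, hd vs) \<in> ?E" using c unfolding circuit_def by auto
  have e01: "(vs!0, vs!1) \<in> ?E" using st len by auto
  then obtain k where k: "k < d" "((vs!0) k, (vs!1) k) \<in> Es k" using edge_form by blast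
  define ws where "ws = drop 1 vs"
  have "ws \<noteq> []" "hd ws = vs!1" "last ws = last vs" using len unfolding ws_def
    by (auto simp: hd_drop_conv_nth)
  moreover have "\<forall>i. Suc i < length ws \<longrightarrow> (ws ! i, ws ! Suc i) \<in> ?E"
    unfolding ws_def using st by auto
  ultimately have "(vs!1, last vs) \<in> ?E\<^sup>*" using path_rtrancl[of ws ?E] by simp
  moreover have "hd vs = vs!0" using len by (cases vs) auto
  ultimately have "(vs!1, vs!0) \<in> ?E\<^sup>*" using cl by (metis rtrancl.rtrancl_into_rtrancl)
  then have "((vs!1) k, (vs!0) k) \<in> (Es k)\<^sup>*" by (rule coord_rtrancl)
  then have "((vs!0) k, (vs!0) k) \<in> (Es k)\<^sup>+" using k(2) by (metis rtrancl_into_trancl2)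
  then show False using tree_no_cycle[OF trees[OF k(1)]] by blast
qed

lemma root_coord:
  assumes trees: "\<And>j. j < d \<Longrightarrow> directed_tree (Vs j) (Es j)"
    and r: "is_root (prod_V d Vs) (prod_E d Vs Es) u" and j: "j < d"
  shows "is_root (Vs j) (Es j) (u j)"
  unfolding is_root_def
proof (intro conjI notI)
  have uV: "u \<in> prod_V d Vs" using r unfolding is_root_def by auto
  then show "u j \<in> Vs j" using j by (auto simp: prod_V_def)
next
  have uV: "u \<in> prod_V d Vs" using r unfolding is_root_def by auto
  assume "\<exists>p. (p, u j) \<in> Es j"
  then obtain p where p: "(p, u j) \<in> Es j" by blast
  have "p \<in> Vs j" using p tree_E_sub[OF trees[OF j]] by blast
  then have u'V: "u(j := p) \<in> prod_V d Vs" using upd_PiE[of u "{..<d}" Vs j p] uV j unfolding prod_V_def by simp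
  have "(u(j := p), u) \<in> prod_E d Vs Es" unfolding prod_E_iff
    using uV u'V j p by auto
  then show False using r unfolding is_root_def by blast
qed

lemma part3:
  assumes trees: "\<And>j. j < d \<Longrightarrow> directed_tree (Vs j) (Es j)"
  shows "\<forall>u v. is_root (prod_V d Vs) (prod_E d Vs Es) u \<and>
                is_root (prod_V d Vs) (prod_E d Vs Es) v \<longrightarrow> u = v"
proof (intro allI impI)
  fix u v assume a: "is_root (prod_V d Vs) (prod_E d Vs Es) u \<and> is_root (prod_V d Vs) (prod_E d Vs Es) v"
  have "u \<in> PiE {..<d} Vs" "v \<in> PiE {..<d} Vs" using a unfolding is_root_def prod_V_def by auto
  moreover have "u i = v i" if "i \<in> {..<d}" for i
  proof -
    have "i < d" using that by simp
    then show ?thesis using tree_root_unique[OF trees[of i] root_coord[of d Vs Es u i] root_coord[of d Vs Es v i]] a trees by blast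
  qed
  ultimately show "u = v" by (rule PiE_ext)
qed




lemma common_child:
  assumes trees: "\<And>j. j < d \<Longrightarrow> directed_tree (Vs j) (Es j)"
    and ne: "u \<noteq> v" and uw: "(u,w) \<in> prod_E d Vs Es" and vw: "(v,w) \<in> prod_E d Vs Es"
  shows "\<exists>k l. k < d \<and> l < d \<and> k \<noteq> l \<and> w = u(k := v k) \<and> (u k, v k) \<in> Es k \<and>
           (v l, u l) \<in> Es l \<and> (\<forall>j. j \<noteq> k \<and> j \<noteq> l \<longrightarrow> u j = v j)"
proof -
  obtain k where k: "k < d" "(u k, w k) \<in> Es k" "w = u(k := w k)" using edge_form[OF uw] by blast
  obtain l where l: "l < d" "(v l, w l) \<in> Es l" "w = v(l := w l)" using edge_form[OF vw] by blast
  have kl: "k \<noteq> l"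
  proof
    assume "k = l"
    then have "u k = v k" using tree_parent_unique[OF trees[OF k(1)] k(2)] l(2) by simp
    then have "u = v" using k(3) l(3) \<open>k = l\<close> by (metis fun_upd_triv fun_upd_upd)
    then show False using ne by simp
  qed
  have wk: "w k = v k" using l(3) kl by (metis fun_upd_other)
  have wl: "w l = u l" using k(3) kl by (metis fun_upd_other)
  have oth: "u j = v j" if "j \<noteq> k" "j \<noteq> l" for j
    using k(3) l(3) that by (metis fun_upd_other)
  show ?thesis
    apply (rule exI[of _ k], rule exI[of _ l])
    using k l kl wk wl oth by auto
qed

lemma part4:
  assumes trees: "\<And>j. j < d \<Longrightarrow> directed_tree (Vs j) (Es j)"
    and ne: "u \<noteq> v"
    and w: "w \<in> Chi (prod_E d Vs Es) u \<inter> Chi (prod_E d Vs Es) v"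
    and w': "w' \<in> Chi (prod_E d Vs Es) u \<inter> Chi (prod_E d Vs Es) v"
  shows "w = w'"
proof -
  have ew: "(u,w) \<in> prod_E d Vs Es" "(v,w) \<in> prod_E d Vs Es" using w by (auto simp: Chi_def)
  have ew': "(u,w') \<in> prod_E d Vs Es" "(v,w') \<in> prod_E d Vs Es" using w' by (auto simp: Chi_def)
  obtain k l where A: "k < d" "l < d" "k \<noteq> l" "w = u(k := v k)" "(u k, v k) \<in> Es k"
    "(v l, u l) \<in> Es l" "\<forall>j. j \<noteq> k \<and> j \<noteq> l \<longrightarrow> u j = v j"
    using common_child[OF trees ne ew] by blast
  obtain k' l' where B: "k' < d" "w' = u(k' := v k')" "(u k', v k') \<in> Es k'"
    using common_child[OF trees ne ew'] by blast
  show ?thesis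
  proof (cases "k' = k")
    case True then show ?thesis using A B by simp
  next
    case False
    have "u k' \<noteq> v k'"
    proof
      assume "u k' = v k'"
      then have "(u k', u k') \<in> (Es k')\<^sup>+" using B(3) by simp
      then show False using tree_no_cycle[OF trees[OF B(1)]] by blast
    qed
    then have "k' = l" using A(7) False by blast
    then have "(u l, u l) \<in> (Es l)\<^sup>+" using B(3) A(6)
      by (metis trancl.r_into_trancl trancl_into_trancl)
    then show ?thesis using tree_no_cycle[OF trees[OF A(2)]] by blast
  qed
qed

lemma card_le1:
  assumes "\<And>x y. x \<in> A \<Longrightarrow> y \<in> A \<Longrightarrow> x = y"
  shows "finite A \<and> card A \<le> 1"
proof (cases "A = {}")
  case True then show ?thesis by simp
next
  case False
  then obtain x where "x \<in> A" by blast
  then have "A = {x}" using assms by blast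
  then show ?thesis by simp
qed

lemma lift:
  assumes trees: "\<And>j. j < d \<Longrightarrow> directed_tree (Vs j) (Es j)"
    and j: "j < d" and x: "x \<in> prod_V d Vs"
    and ab: "(a,b) \<in> (Es j \<union> (Es j)\<inverse>)\<^sup>*" and a: "a \<in> Vs j"
  shows "(x(j := a), x(j := b)) \<in> (prod_E d Vs Es \<union> (prod_E d Vs Es)\<inverse>)\<^sup>*"
  using ab
proof (induction rule: rtrancl_induct)
  case base then show ?case by simp
next
  case (step y z)
  have sub: "Es j \<subseteq> Vs j \<times> Vs j" using tree_E_sub[OF trees[OF j]] .
  have yz: "y \<in> Vs j" "z \<in> Vs j" using step(2) sub by auto
  have yV: "x(j := y) \<in> prod_V d Vs" using upd_PiE[of x "{..<d}" Vs j y] x j yz unfolding prod_V_def by simp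
  have zV: "x(j := z) \<in> prod_V d Vs" using upd_PiE[of x "{..<d}" Vs j z] x j yz unfolding prod_V_def by simp
  have "(x(j := y), x(j := z)) \<in> prod_E d Vs Es \<union> (prod_E d Vs Es)\<inverse>"
  proof (cases "(y,z) \<in> Es j")
    case True
    then have "(x(j := y), x(j := z)) \<in> prod_E d Vs Es" unfolding prod_E_iff using yV zV j by auto
    then show ?thesis by blast
  next
    case False
    then have "(z,y) \<in> Es j" using step(2) by blast
    then have "(x(j := z), x(j := y)) \<in> prod_E d Vs Es" unfolding prod_E_iff using yV zV j by auto
    then show ?thesis by blast
  qed
  then show ?case using step(3) by (metis rtrancl.rtrancl_into_rtrancl)
qed

lemma tree_conn:
  assumes t: "directed_tree V E" and "a \<in> V" "b \<in> V"
  shows "(a,b) \<in> (E \<union> E\<inverse>)\<^sup>*"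
proof (cases "a = b")
  case True then show ?thesis by simp
next
  case False
  then obtain vs where vs: "vs \<noteq> []" "hd vs = a" "last vs = b"
    and st: "\<forall>i. Suc i < length vs \<longrightarrow> (vs ! i, vs ! Suc i) \<in> E \<or> (vs ! Suc i, vs ! i) \<in> E"
    using t assms unfolding directed_tree_def connected_digraph_def by blast
  have "\<forall>i. Suc i < length vs \<longrightarrow> (vs ! i, vs ! Suc i) \<in> E \<union> E\<inverse>" using st by blast
  then show ?thesis using path_rtrancl[OF vs(1)] vs by simp
qed

lemma part2:
  assumes trees: "\<And>j. j < d \<Longrightarrow> directed_tree (Vs j) (Es j)"
  shows "connected_digraph (prod_V d Vs) (prod_E d Vs Es)"
  unfolding connected_digraph_def
proof (intro ballI impI)
  fix u v assume uV: "u \<in> prod_V d Vs" and vV: "v \<in> prod_V d Vs" and "u \<noteq> v"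
  let ?E = "prod_E d Vs Es"
  let ?S = "?E \<union> ?E\<inverse>"
  define w where "w m = (\<lambda>i. if i < m then v i else u i)" for m
  have wV: "w m \<in> prod_V d Vs" for m
    using uV vV unfolding w_def prod_V_def PiE_iff extensional_def by auto
  have "m \<le> d \<Longrightarrow> (u, w m) \<in> ?S\<^sup>*" for m
  proof (induction m)
    case 0 then show ?case by (simp add: w_def)
  next
    case (Suc m)
    then have m: "m < d" by simp
    have um: "u m \<in> Vs m" "v m \<in> Vs m" using uV vV m by (auto simp: prod_V_def)
    have e1: "w m = (w m)(m := u m)" by (simp add: w_def fun_eq_iff)
    have e2: "w (Suc m) = (w m)(m := v m)" by (auto simp: w_def)
    have "((w m)(m := u m), (w m)(m := v m)) \<in> ?S\<^sup>*"
      by (rule lift[OF trees m wV tree_conn[OF trees[OF m] um] um(1)])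
    then have "(w m, w (Suc m)) \<in> ?S\<^sup>*" using e1 e2 by simp
    then show ?case using Suc by (meson Suc_leD rtrancl_trans)
  qed
  moreover have "w d = v"
  proof
    fix i show "w d i = v i"
      using uV vV PiE_arb[of u "{..<d}" Vs i] PiE_arb[of v "{..<d}" Vs i]
      unfolding w_def prod_V_def by auto
  qed
  ultimately have "(u, v) \<in> ?S\<^sup>*" by auto
  moreover have "?S \<subseteq> prod_V d Vs \<times> prod_V d Vs" by (auto dest: prod_E_V)
  ultimately obtain vs where "vs \<noteq> [] \<and> hd vs = u \<and> last vs = v \<and> distinct vs \<and> set vs \<subseteq> prod_V d Vs \<and>
    (\<forall>i. Suc i < length vs \<longrightarrow> (vs!i, vs!Suc i) \<in> ?S)"
    using simple_path[of u v ?S "prod_V d Vs"] uV by blast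
  then show "\<exists>vs. vs \<noteq> [] \<and> hd vs = u \<and> last vs = v \<and> distinct vs \<and> set vs \<subseteq> prod_V d Vs \<and>
              (\<forall>i. Suc i < length vs \<longrightarrow> (vs ! i, vs ! Suc i) \<in> ?E \<or> (vs ! Suc i, vs ! i) \<in> ?E)"
    by blast
qed

theorem mainTheorem9:
  fixes d :: nat and Vs :: "nat \<Rightarrow> 'a set" and Es :: "nat \<Rightarrow> ('a \<times> 'a) set"
  assumes trees: "\<And>j. j < d \<Longrightarrow> directed_tree (Vs j) (Es j)"
  shows "\<not> has_circuit (prod_V d Vs) (prod_E d Vs Es) \<and>
         connected_digraph (prod_V d Vs) (prod_E d Vs Es) \<and>
         (\<forall>u v. is_root (prod_V d Vs) (prod_E d Vs Es) u \<and>
                is_root (prod_V d Vs) (prod_E d Vs Es) v \<longrightarrow> u = v) \<and>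
         (\<forall>u\<in>prod_V d Vs. \<forall>v\<in>prod_V d Vs. u \<noteq> v \<longrightarrow>
            finite (Chi (prod_E d Vs Es) u \<inter> Chi (prod_E d Vs Es) v) \<and>
            card (Chi (prod_E d Vs Es) u \<inter> Chi (prod_E d Vs Es) v) \<le> 1)"
proof (intro conjI)
  show "\<not> has_circuit (prod_V d Vs) (prod_E d Vs Es)" by (rule part1[OF trees])
  show "connected_digraph (prod_V d Vs) (prod_E d Vs Es)" by (rule part2[OF trees])
  show "\<forall>u v. is_root (prod_V d Vs) (prod_E d Vs Es) u \<and>
                is_root (prod_V d Vs) (prod_E d Vs Es) v \<longrightarrow> u = v" by (rule part3[OF trees])
  show "\<forall>u\<in>prod_V d Vs. \<forall>v\<in>prod_V d Vs. u \<noteq> v \<longrightarrow>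
            finite (Chi (prod_E d Vs Es) u \<inter> Chi (prod_E d Vs Es) v) \<and>
            card (Chi (prod_E d Vs Es) u \<inter> Chi (prod_E d Vs Es) v) \<le> 1"
  proof (intro ballI impI)
    fix u v assume "u \<in> prod_V d Vs" "v \<in> prod_V d Vs" "u \<noteq> v"
    show "finite (Chi (prod_E d Vs Es) u \<inter> Chi (prod_E d Vs Es) v) \<and>
            card (Chi (prod_E d Vs Es) u \<inter> Chi (prod_E d Vs Es) v) \<le> 1"
      by (rule card_le1) (rule part4[OF trees \<open>u \<noteq> v\<close>])
  qed
qed


end
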